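(* Let $m,n\geq 6$ and $r\geq 2$. Then $\varphi(\mathcal{P}^r_{m-5}\cup\mathcal{W}_{n-1},x)=\varphi(\mathcal{P}^r_{n-5}\cup\mathcal{W}_{m-1},x)$.
   Context: The loose path $\mathcal{P}^r_t=v_1e_1v_2\cdots v_te_tv_{t+1}$ of length $t\geq 1$ has edges $e_i=\{v_i,u_{i,1},\dots,u_{i,r-2},v_{i+1}\}$, all listed vertices distinct (for $r=2$ it is the ordinary path with $t$ edges). For $N\geq 5$, $\mathcal{W}_N$ is the $r$-uniform hypergraph obtained from the loose path $\mathcal{P}^r_{N-2}$ (vertices $v_1,\dots,v_{N-1}$) by attaching one pendent edge (an edge containing one existing vertex and $r-1$ new vertices) at $v_2$ and one at $v_{N-2}$. $\cup$ denotes disjoint union. For an $r$-uniform hypergraph $\mathcal{K}$ on $n'$ vertices, $m(\mathcal{K},k)$ is the number of sets of $k$ pairwise disjoint edges ($m(\mathcal{K},0)=1$) and $\varphi(\mathcal{K},x)=\sum_{k\geq0}(-1)^km(\mathcal{K},k)x^{n'-kr}$ is the matching polynomial. *)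

theory Defs
  imports "HOL-Computational_Algebra.Polynomial"
begin

type_synonym 'a hypergraph = "'a set \<times> 'a set set"

text \<open>Vertex names: V i = v_i, U i j = u_{i,j}, A j / B j = new vertices of the
  two pendent edges of W_N.\<close>
datatype vtx = V nat | U nat nat | A nat | B nat

definition path_edge :: "nat \<Rightarrow> nat \<Rightarrow> vtx set" where
  "path_edge r i = {V i, V (Suc i)} \<union> {U i j | j. 1 \<le> j \<and> j \<le> r - 2}"

definition loose_path :: "nat \<Rightarrow> nat \<Rightarrow> vtx hypergraph" where
  "loose_path r t =
     (let E = {path_edge r i | i. 1 \<le> i \<and> i \<le> t} in (\<Union>E, E))"

definition W_graph :: "nat \<Rightarrow> nat \<Rightarrow> vtx hypergraph" where
  "W_graph r N =
     (let E = {path_edge r i | i. 1 \<le> i \<and> i \<le> N - 2}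
              \<union> {insert (V 2) {A j | j. 1 \<le> j \<and> j \<le> r - 1},
                 insert (V (N - 2)) {B j | j. 1 \<le> j \<and> j \<le> r - 1}}
      in (\<Union>E, E))"

definition disj_union :: "'a hypergraph \<Rightarrow> 'b hypergraph \<Rightarrow> ('a + 'b) hypergraph" where
  "disj_union G H = (Inl ` fst G \<union> Inr ` fst H, (image Inl) ` snd G \<union> (image Inr) ` snd H)"

definition matching_number :: "'a hypergraph \<Rightarrow> nat \<Rightarrow> nat" where
  "matching_number K k = card {M. M \<subseteq> snd K \<and> card M = k \<and> pairwise disjnt M}"

definition matching_poly :: "nat \<Rightarrow> 'a hypergraph \<Rightarrow> int poly" where
  "matching_poly r K = (\<Sum>k\<le>card (snd K).
      monom ((-1) ^ k * int (matching_number K k)) (card (fst K) - k * r))"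

end

theory Submission
  imports Defs
begin

lemma fin_match: "finite E \<Longrightarrow> finite {M. M \<subseteq> E \<and> P M}"
  by (rule finite_subset[of _ "Pow E"]) auto

lemma monom_Suc_X: "monom (1::int) (Suc n) = [:0,1:] * monom 1 n"
  by (simp add: monom_Suc)

definition mp :: "'a set set \<Rightarrow> int poly" where
  "mp E = (\<Sum>M\<in>{M. M \<subseteq> E \<and> pairwise disjnt M}. monom 1 (card M))"

lemma mp_coeff:
  assumes "finite E"
  shows "coeff (mp E) k = int (card {M. M \<subseteq> E \<and> card M = k \<and> pairwise disjnt M})"
proof -
  have fin: "finite {M. M \<subseteq> E \<and> pairwise disjnt M}"
    using assms by (rule fin_match)
  have "coeff (mp E) k = (\<Sum>M\<in>{M. M \<subseteq> E \<and> pairwise disjnt M}. if card M = k then 1 else 0)"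
    unfolding mp_def coeff_sum coeff_monom by simp
  also have "\<dots> = int (card {M \<in> {M. M \<subseteq> E \<and> pairwise disjnt M}. card M = k})"
    using fin by (simp add: sum.If_cases) (rule arg_cong[where f=card], auto)
  also have "{M \<in> {M. M \<subseteq> E \<and> pairwise disjnt M}. card M = k} = {M. M \<subseteq> E \<and> card M = k \<and> pairwise disjnt M}"
    by auto
  finally show ?thesis .
qed

lemma mp_empty: "mp {} = 1"
proof -
  have "{M. M \<subseteq> ({}::'a set set) \<and> pairwise disjnt M} = {{}}" by auto
  then show ?thesis unfolding mp_def by (simp add: one_poly_def monom_0)
qed

lemma mp_rec:
  assumes fin: "finite E" and eE: "e \<in> E" and ne: "e \<noteq> {}"
  shows "mp E = mp (E - {e}) + [:0,1:] * mp {f\<in>E. disjnt f e}"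
proof -
  define D where "D = {f\<in>E. disjnt f e}"
  define S where "S = {M. M \<subseteq> E \<and> pairwise disjnt M}"
  define S1 where "S1 = {M. M \<subseteq> E - {e} \<and> pairwise disjnt M}"
  define S3 where "S3 = {M. M \<subseteq> D \<and> pairwise disjnt M}"
  have finS: "finite S" unfolding S_def
    using fin by (rule fin_match)
  have eD: "e \<notin> D" using ne unfolding D_def disjnt_def by auto
  have split: "S = S1 \<union> insert e ` S3"
  proof
    show "S \<subseteq> S1 \<union> insert e ` S3"
    proof
      fix M assume M: "M \<in> S"
      show "M \<in> S1 \<union> insert e ` S3"
      proof (cases "e \<in> M")
        case False then show ?thesis using M unfolding S_def S1_def by auto
      next
        case True
        have "M - {e} \<in> S3" using M True unfolding S_def S3_def D_def
          by (auto simp: pairwise_def intro: pairwise_subset)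
        moreover have "M = insert e (M - {e})" using True by auto
        ultimately show ?thesis by blast
      qed
    qed
  next
    show "S1 \<union> insert e ` S3 \<subseteq> S"
    proof
      fix M assume "M \<in> S1 \<union> insert e ` S3"
      then show "M \<in> S"
      proof
        assume "M \<in> S1" then show ?thesis unfolding S1_def S_def by auto
      next
        assume "M \<in> insert e ` S3"
        then obtain M' where M': "M' \<in> S3" "M = insert e M'" by auto
        have sub: "M' \<subseteq> D" and pw: "pairwise disjnt M'" using M'(1) unfolding S3_def by auto
        have "M \<subseteq> E" using sub eE unfolding M'(2) D_def by auto
        moreover have "pairwise disjnt M"
        proof -
          have "\<forall>y. y \<in> M' \<and> y \<noteq> e \<longrightarrow> disjnt e y \<and> disjnt y e"
            using sub unfolding D_def by (auto simp: disjnt_sym)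
          then show ?thesis unfolding M'(2) pairwise_insert using pw by blast
        qed
        ultimately show ?thesis unfolding S_def by simp
      qed
    qed
  qed
  have disj: "S1 \<inter> insert e ` S3 = {}" unfolding S1_def by auto
  have inj: "inj_on (insert e) S3"
  proof (rule inj_onI)
    fix M N assume "M \<in> S3" "N \<in> S3" "insert e M = insert e N"
    moreover have "e \<notin> M" "e \<notin> N" using eD \<open>M \<in> S3\<close> \<open>N \<in> S3\<close> unfolding S3_def by auto
    ultimately show "M = N" by (metis Diff_insert_absorb)
  qed
  have finS3: "finite S3" unfolding S3_def
    using fin by (intro fin_match) (auto simp: D_def)
  have finS1: "finite S1" unfolding S1_def
    using fin by (intro fin_match) auto
  have "mp E = (\<Sum>M\<in>S. monom 1 (card M))" unfolding mp_def S_def ..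
  also have "\<dots> = (\<Sum>M\<in>S1. monom 1 (card M)) + (\<Sum>M\<in>insert e ` S3. monom 1 (card M))"
    unfolding split using finS1 finS3 disj by (simp add: sum.union_disjoint)
  also have "(\<Sum>M\<in>insert e ` S3. monom (1::int) (card M)) = (\<Sum>M\<in>S3. monom 1 (card (insert e M)))"
    using inj by (simp add: sum.reindex)
  also have "\<dots> = (\<Sum>M\<in>S3. [:0,1:] * monom 1 (card M))"
  proof (rule sum.cong[OF refl])
    fix M assume M: "M \<in> S3"
    have "finite M" using M fin unfolding S3_def D_def by (auto intro: finite_subset)
    moreover have "e \<notin> M" using M eD unfolding S3_def by auto
    ultimately have "card (insert e M) = Suc (card M)" by simp
    then show "monom (1::int) (card (insert e M)) = [:0,1:] * monom 1 (card M)"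
      by (simp only: monom_Suc_X)
  qed
  also have "\<dots> = [:0,1:] * mp D" unfolding mp_def S3_def by (simp add: sum_distrib_left)
  finally show ?thesis unfolding mp_def S1_def D_def by simp
qed


lemma mp_image:
  assumes "finite E" "inj_on h E" "\<forall>x\<in>E. \<forall>y\<in>E. disjnt (h x) (h y) = disjnt x y"
    "\<forall>x\<in>E. x \<noteq> {}" "\<forall>x\<in>E. h x \<noteq> {}"
  shows "mp (h ` E) = mp E"
  using assms
proof (induction "card E" arbitrary: E rule: less_induct)
  case less
  show ?case
  proof (cases "E = {}")
    case True then show ?thesis by (simp add: mp_empty)
  next
    case False
    then obtain e where eE: "e \<in> E" by auto
    define D where "D = {f\<in>E. disjnt f e}"
    have neq: "e \<noteq> {}" "h e \<noteq> {}" using less.prems eE by auto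
    have eD: "e \<notin> D" using neq unfolding D_def disjnt_def by auto
    have c1: "card (E - {e}) < card E" using less.prems(1) eE by (rule card_Diff1_less)
    have "D \<subset> E" using eD eE unfolding D_def by blast
    then have c2: "card D < card E" using less.prems(1) by (intro psubset_card_mono)
    have i1: "h ` E - {h e} = h ` (E - {e})" using less.prems(2) eE by (auto simp: inj_on_def)
    have i2: "{f\<in>h ` E. disjnt f (h e)} = h ` D" using less.prems(3) eE unfolding D_def by auto
    have "mp (h ` E) = mp (h ` E - {h e}) + [:0,1:] * mp {f\<in>h ` E. disjnt f (h e)}"
      using less.prems eE neq by (intro mp_rec) auto
    also have "mp (h ` E - {h e}) = mp (E - {e})" unfolding i1
      using less.prems by (intro less.hyps[OF c1]) (auto intro: inj_on_subset)
    also have "mp {f\<in>h ` E. disjnt f (h e)} = mp D" unfolding i2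
      using less.prems by (intro less.hyps[OF c2]) (auto simp: D_def intro: inj_on_subset)
    also have "mp (E - {e}) + [:0,1:] * mp D = mp E"
      unfolding D_def using less.prems eE neq by (intro mp_rec[symmetric]) auto
    finally show ?thesis .
  qed
qed

lemma mp_union:
  assumes "finite E1" "finite E2" "\<forall>x\<in>E1. \<forall>y\<in>E2. disjnt x y" "\<forall>x\<in>E1. x \<noteq> {}"
  shows "mp (E1 \<union> E2) = mp E1 * mp E2"
  using assms
proof (induction "card E1" arbitrary: E1 rule: less_induct)
  case less
  show ?case
  proof (cases "E1 = {}")
    case True then show ?thesis by (simp add: mp_empty)
  next
    case False
    then obtain e where eE: "e \<in> E1" by auto
    define D where "D = {f\<in>E1. disjnt f e}"
    have neq: "e \<noteq> {}" using less.prems eE by auto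
    have eD: "e \<notin> D" using neq unfolding D_def disjnt_def by auto
    have c1: "card (E1 - {e}) < card E1" using less.prems(1) eE by (rule card_Diff1_less)
    have "D \<subset> E1" using eD eE unfolding D_def by blast
    then have c2: "card D < card E1" using less.prems(1) by (intro psubset_card_mono)
    have eE2: "e \<notin> E2" using less.prems(3) eE neq unfolding disjnt_def by auto
    have i1: "E1 \<union> E2 - {e} = (E1 - {e}) \<union> E2" using eE2 by auto
    have i2: "{f\<in>E1 \<union> E2. disjnt f e} = D \<union> E2"
      using less.prems(3) eE unfolding D_def by (auto simp: disjnt_sym)
    have "mp (E1 \<union> E2) = mp (E1 \<union> E2 - {e}) + [:0,1:] * mp {f\<in>E1 \<union> E2. disjnt f e}"
      using less.prems eE neq by (intro mp_rec) auto
    also have "mp (E1 \<union> E2 - {e}) = mp (E1 - {e}) * mp E2" unfolding i1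
      using less.prems by (intro less.hyps[OF c1]) auto
    also have "mp {f\<in>E1 \<union> E2. disjnt f e} = mp D * mp E2" unfolding i2
      using less.prems by (intro less.hyps[OF c2]) (auto simp: D_def)
    also have "mp (E1 - {e}) * mp E2 + [:0,1:] * (mp D * mp E2) = (mp (E1 - {e}) + [:0,1:] * mp D) * mp E2"
      by (simp add: algebra_simps)
    also have "mp (E1 - {e}) + [:0,1:] * mp D = mp E1"
      unfolding D_def using less.prems eE neq by (intro mp_rec[symmetric]) auto
    finally show ?thesis .
  qed
qed

lemma disjnt_image_inj: "inj f \<Longrightarrow> disjnt (f ` x) (f ` y) = disjnt x y"
  unfolding disjnt_def by (simp add: image_Int[symmetric])

lemma inj_on_image_inj: "inj f \<Longrightarrow> inj_on (image f) X"
  by (rule inj_onI) (simp add: inj_image_eq_iff)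

lemma mp_disj_union:
  fixes G :: "'a hypergraph" and H :: "'b hypergraph"
  assumes "finite (snd G)" "finite (snd H)" "\<forall>x\<in>snd G. x \<noteq> {}" "\<forall>x\<in>snd H. x \<noteq> {}"
  shows "mp (snd (disj_union G H)) = mp (snd G) * mp (snd H)"
proof -
  have "mp (snd (disj_union G H)) = mp (image (Inl :: 'a \<Rightarrow> 'a + 'b) ` snd G) * mp (image (Inr :: 'b \<Rightarrow> 'a + 'b) ` snd H)"
    unfolding disj_union_def snd_conv
  proof (rule mp_union)
    show "finite ((`) Inl ` snd G)" "finite ((`) Inr ` snd H)" using assms by auto
    show "\<forall>x\<in>(`) Inl ` snd G. x \<noteq> {}" using assms by auto
    show "\<forall>x\<in>(`) Inl ` snd G. \<forall>y\<in>(`) Inr ` snd H. disjnt x y"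
      by (auto simp: disjnt_def)
  qed
  also have "mp (image (Inl :: 'a \<Rightarrow> 'a + 'b) ` snd G) = mp (snd G)"
  proof (rule mp_image)
    have i: "inj (Inl :: 'a \<Rightarrow> 'a + 'b)" by (simp add: inj_def)
    show "inj_on (image (Inl :: 'a \<Rightarrow> 'a + 'b)) (snd G)" using i by (rule inj_on_image_inj)
    show "\<forall>x\<in>snd G. \<forall>y\<in>snd G. disjnt (image (Inl :: 'a \<Rightarrow> 'a + 'b) x) (image Inl y) = disjnt x y"
      using disjnt_image_inj[OF i] by blast
    show "finite (snd G)" "\<forall>x\<in>snd G. x \<noteq> {}" using assms by auto
    show "\<forall>x\<in>snd G. image (Inl :: 'a \<Rightarrow> 'a + 'b) x \<noteq> {}" using assms by auto
  qed
  also have "mp (image (Inr :: 'b \<Rightarrow> 'a + 'b) ` snd H) = mp (snd H)"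
  proof (rule mp_image)
    have i: "inj (Inr :: 'b \<Rightarrow> 'a + 'b)" by (simp add: inj_def)
    show "inj_on (image (Inr :: 'b \<Rightarrow> 'a + 'b)) (snd H)" using i by (rule inj_on_image_inj)
    show "\<forall>x\<in>snd H. \<forall>y\<in>snd H. disjnt (image (Inr :: 'b \<Rightarrow> 'a + 'b) x) (image Inr y) = disjnt x y"
      using disjnt_image_inj[OF i] by blast
    show "finite (snd H)" "\<forall>x\<in>snd H. x \<noteq> {}" using assms by auto
    show "\<forall>x\<in>snd H. image (Inr :: 'b \<Rightarrow> 'a + 'b) x \<noteq> {}" using assms by auto
  qed
  finally show ?thesis .
qed


section \<open>Concrete hypergraphs\<close>

lemma pe_ne: "path_edge r i \<noteq> {}"
  unfolding path_edge_def by auto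

lemma V_in_pe: "V k \<in> path_edge r i \<longleftrightarrow> k = i \<or> k = Suc i"
  unfolding path_edge_def by auto

lemma pe_disjnt: "disjnt (path_edge r i) (path_edge r j) \<longleftrightarrow> (Suc i < j \<or> Suc j < i)"
proof
  assume d: "disjnt (path_edge r i) (path_edge r j)"
  show "Suc i < j \<or> Suc j < i"
  proof (rule ccontr)
    assume "\<not> (Suc i < j \<or> Suc j < i)"
    then have "i = j \<or> j = Suc i \<or> i = Suc j" by auto
    then have "\<exists>k. V k \<in> path_edge r i \<and> V k \<in> path_edge r j"
      unfolding V_in_pe by auto
    then show False using d unfolding disjnt_def by auto
  qed
next
  assume "Suc i < j \<or> Suc j < i"
  then show "disjnt (path_edge r i) (path_edge r j)"
    unfolding path_edge_def disjnt_def by auto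
qed

lemma pe_inj: "inj (path_edge r)"
proof (rule injI)
  fix i j assume e: "path_edge r i = path_edge r j"
  have "V i \<in> path_edge r j" using e V_in_pe[of i r i] by simp
  moreover have "V j \<in> path_edge r i" using e V_in_pe[of j r j] by simp
  ultimately show "i = j" unfolding V_in_pe by auto
qed

fun p :: "nat \<Rightarrow> int poly" where
  "p 0 = 1"
| "p (Suc 0) = [:1,1:]"
| "p (Suc (Suc n)) = p (Suc n) + [:0,1:] * p n"

lemma mp_single: "e \<noteq> {} \<Longrightarrow> mp {e} = [:1,1:]"
proof -
  assume ne: "e \<noteq> {}"
  have "mp {e} = mp ({e} - {e}) + [:0,1:] * mp {f\<in>{e}. disjnt f e}"
    using ne by (intro mp_rec) auto
  also have "{f\<in>{e}. disjnt f e} = {}" using ne by (auto simp: disjnt_def)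
  also have "{e} - {e} = {}" by simp
  finally show ?thesis by (simp add: mp_empty one_pCons)
qed

lemma mp_path: "mp (path_edge r ` {s..<s+t}) = p t"
proof (induction t rule: p.induct)
  case 1 then show ?case by (simp add: mp_empty)
next
  case 2
  have "path_edge r ` {s..<s+Suc 0} = {path_edge r s}" by auto
  then show ?case by (simp add: mp_single pe_ne)
next
  case (3 n)
  define e where "e = path_edge r (s+n+1)"
  have "path_edge r ` {s..<s+Suc (Suc n)} - {e} = path_edge r ` ({s..<s+Suc (Suc n)} - {s+n+1})"
    unfolding e_def using image_set_diff[OF pe_inj, of r _ "{s+n+1}"] by simp
  also have "{s..<s+Suc (Suc n)} - {s+n+1} = {s..<s+Suc n}" by auto
  finally have i1: "path_edge r ` {s..<s+Suc (Suc n)} - {e} = path_edge r ` {s..<s+Suc n}" .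
  have i2: "{f\<in>path_edge r ` {s..<s+Suc (Suc n)}. disjnt f e} = path_edge r ` {s..<s+n}"
    unfolding e_def by (auto simp: pe_disjnt)
  have "mp (path_edge r ` {s..<s+Suc (Suc n)}) = mp (path_edge r ` {s..<s+Suc (Suc n)} - {e})
      + [:0,1:] * mp {f\<in>path_edge r ` {s..<s+Suc (Suc n)}. disjnt f e}"
    by (rule mp_rec) (auto simp: e_def pe_ne)
  then show ?case unfolding i1 i2 using "3.IH" by simp
qed

lemma X14: "[:1,4:] = 1 + 4 * ([:0,1:] :: int poly)"
  by (simp add: one_pCons numeral_poly)

lemma X11: "[:1,1:] = 1 + ([:0,1:] :: int poly)"
  by (simp add: one_pCons)

lemma p_W: "1 \<le> b \<Longrightarrow> p (b+2) + [:0,1:] * p b + [:0,1:] * (p b + [:0,1:] * p (b-2)) = [:1,4:] * p b"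
proof -
  assume "1 \<le> b"
  then obtain c where c: "b = Suc c" by (cases b) auto
  define x :: "int poly" where "x = [:0,1:]"
  have pb2: "p (b+2) = p b + x * p c + x * p b" using c by (simp add: x_def)
  show ?thesis
  proof (cases c)
    case 0
    have p1: "p b = 1 + x" using c 0 by (simp add: x_def X11)
    have p0: "p (b-2) = 1" using c 0 by simp
    have p1': "p c = 1" using 0 by simp
    show ?thesis unfolding pb2 p0 p1 p1' X14 x_def[symmetric] by algebra
  next
    case (Suc d)
    have pb: "p b = p c + x * p d" using c Suc by (simp add: x_def)
    have pd: "p (b-2) = p d" using c Suc by simp
    show ?thesis unfolding pb2 pd X14 x_def[symmetric] unfolding pb by algebra
  qed
qed


lemma LP_snd: "snd (loose_path r t) = path_edge r ` {1..<1+t}"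
  unfolding loose_path_def Let_def by auto

definition fa :: "nat \<Rightarrow> vtx set" where
  "fa r = insert (V 2) {A j | j. 1 \<le> j \<and> j \<le> r - 1}"
definition fb :: "nat \<Rightarrow> nat \<Rightarrow> vtx set" where
  "fb r N = insert (V (N - 2)) {B j | j. 1 \<le> j \<and> j \<le> r - 1}"

lemma W_snd: "snd (W_graph r N) = path_edge r ` {1..<1+(N-2)} \<union> {fa r, fb r N}"
  unfolding W_graph_def Let_def fa_def fb_def by auto

lemma pe_fa: "disjnt (path_edge r i) (fa r) \<longleftrightarrow> (i \<noteq> 2 \<and> Suc i \<noteq> 2)"
  unfolding fa_def path_edge_def disjnt_def by auto

lemma pe_fb: "disjnt (path_edge r i) (fb r N) \<longleftrightarrow> (i \<noteq> N - 2 \<and> Suc i \<noteq> N - 2)"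
  unfolding fb_def path_edge_def disjnt_def by auto

lemma fa_notin: "r \<ge> 2 \<Longrightarrow> fa r \<notin> path_edge r ` X"
proof
  assume "r \<ge> 2" "fa r \<in> path_edge r ` X"
  moreover have "A 1 \<in> fa r" using \<open>r \<ge> 2\<close> unfolding fa_def by auto
  ultimately show False unfolding path_edge_def by auto
qed

lemma fb_notin: "r \<ge> 2 \<Longrightarrow> fb r N \<notin> path_edge r ` X"
proof
  assume "r \<ge> 2" "fb r N \<in> path_edge r ` X"
  moreover have "B 1 \<in> fb r N" using \<open>r \<ge> 2\<close> unfolding fb_def by auto
  ultimately show False unfolding path_edge_def by auto
qed

lemma fa_fb: "r \<ge> 2 \<Longrightarrow> N \<ge> 5 \<Longrightarrow> disjnt (fb r N) (fa r)"
  unfolding fa_def fb_def disjnt_def by auto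

lemma fa_ne: "fa r \<noteq> {}" unfolding fa_def by auto
lemma fb_ne: "fb r N \<noteq> {}" unfolding fb_def by auto

lemma mp_Qfb:
  assumes "r \<ge> 2"
  shows "mp (path_edge r ` {s..<b+3} \<union> {fb r (b+4)}) = mp (path_edge r ` {s..<b+3}) + [:0,1:] * mp (path_edge r ` {s..<b+1})"
proof -
  let ?Q = "path_edge r ` {s..<b+3}"
  have i1: "?Q \<union> {fb r (b+4)} - {fb r (b+4)} = ?Q" using fb_notin[OF assms] by auto
  have i2: "{f \<in> ?Q \<union> {fb r (b+4)}. disjnt f (fb r (b+4))} = path_edge r ` {s..<b+1}"
    using fb_ne by (auto simp: pe_fb)
  show ?thesis
    using mp_rec[of "?Q \<union> {fb r (b+4)}" "fb r (b+4)"] fb_ne unfolding i1 i2 by simp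
qed

lemma mp_W:
  assumes "r \<ge> 2" "b \<ge> 1"
  shows "mp (snd (W_graph r (b+4))) = [:1,4:] * p b"
proof -
  let ?E = "path_edge r ` {1..<b+3} \<union> {fa r, fb r (b+4)}"
  have h: "1 + (b+4-2) = b+3" by simp
  have E: "snd (W_graph r (b+4)) = ?E" unfolding W_snd h ..
  have d: "disjnt (fb r (b+4)) (fa r)" using fa_fb[OF assms(1), of "b+4"] assms(2) by simp
  have faE: "fa r \<noteq> fb r (b+4)"
  proof
    assume "fa r = fb r (b+4)"
    then have "disjnt (fa r) (fa r)" using d by simp
    then show False using fa_ne[of r] by (simp add: disjnt_def)
  qed
  have i1: "?E - {fa r} = path_edge r ` {1..<b+3} \<union> {fb r (b+4)}"
    using fa_notin[OF assms(1)] faE by auto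
  have i2: "{f\<in>?E. disjnt f (fa r)} = path_edge r ` {3..<b+3} \<union> {fb r (b+4)}"
  proof -
    have nd: "\<not> disjnt (fa r) (fa r)" using fa_ne[of r] by (simp add: disjnt_def)
    show ?thesis using d nd by (auto simp: pe_fa)
  qed
  have "mp ?E = mp (?E - {fa r}) + [:0,1:] * mp {f\<in>?E. disjnt f (fa r)}"
    using fa_ne by (intro mp_rec) auto
  also have "\<dots> = (mp (path_edge r ` {1..<b+3}) + [:0,1:] * mp (path_edge r ` {1..<b+1}))
       + [:0,1:] * (mp (path_edge r ` {3..<b+3}) + [:0,1:] * mp (path_edge r ` {3..<b+1}))"
    unfolding i1 i2 mp_Qfb[OF assms(1)] ..
  finally have eq: "mp ?E = (mp (path_edge r ` {1..<b+3}) + [:0,1:] * mp (path_edge r ` {1..<b+1}))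
       + [:0,1:] * (mp (path_edge r ` {3..<b+3}) + [:0,1:] * mp (path_edge r ` {3..<b+1}))" .
  have s1: "{1..<b+3} = {1..<1+(b+2)}" by auto
  have s2: "{1..<b+1} = {1..<1+b}" by auto
  have s3: "{3..<b+3} = {3..<3+b}" by auto
  have s4: "{3..<b+1} = {3..<3+(b-2)}" using assms(2) by auto
  have "mp ?E = p (b+2) + [:0,1:] * p b + [:0,1:] * (p b + [:0,1:] * p (b-2))"
    using eq unfolding s1 s2 s3 s4 mp_path by (simp add: algebra_simps)
  then show ?thesis unfolding E p_W[OF assms(2)] .
qed


lemma mpoly:
  assumes fin: "finite (snd K)" and N: "card (snd K) \<le> N"
  shows "matching_poly r K = (\<Sum>k\<le>N. monom ((-1)^k * coeff (mp (snd K)) k) (card (fst K) - k*r))"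
proof -
  have mn: "int (matching_number K k) = coeff (mp (snd K)) k" for k
    unfolding matching_number_def using mp_coeff[OF fin] by simp
  have z: "coeff (mp (snd K)) k = 0" if "k > card (snd K)" for k
  proof -
    have "card M \<noteq> k" if "M \<subseteq> snd K" for M
      using card_mono[OF fin that] \<open>k > card (snd K)\<close> by simp
    then have "{M. M \<subseteq> snd K \<and> card M = k \<and> pairwise disjnt M} = {}"
      by blast
    then show ?thesis unfolding mp_coeff[OF fin] by (simp only: card.empty)
  qed
  have "matching_poly r K = (\<Sum>k\<le>card (snd K). monom ((-1)^k * coeff (mp (snd K)) k) (card (fst K) - k*r))"
    unfolding matching_poly_def mn ..
  also have "\<dots> = (\<Sum>k\<le>N. monom ((-1)^k * coeff (mp (snd K)) k) (card (fst K) - k*r))"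
  proof (rule sum.mono_neutral_left)
    show "finite {..N}" by simp
    show "{..card (snd K)} \<subseteq> {..N}" using N by auto
    show "\<forall>i\<in>{..N} - {..card (snd K)}. monom ((-1)^i * coeff (mp (snd K)) i) (card (fst K) - i*r) = 0"
      using z by auto
  qed
  finally show ?thesis .
qed

lemma card_snd_du:
  fixes G :: "'a hypergraph" and H :: "'b hypergraph"
  assumes "finite (snd G)" "finite (snd H)"
  shows "card (snd (disj_union G H)) \<le> card (snd G) + card (snd H)"
proof -
  have "card (snd (disj_union G H)) \<le> card (image (Inl :: 'a \<Rightarrow> 'a + 'b) ` snd G) + card (image (Inr :: 'b \<Rightarrow> 'a + 'b) ` snd H)"
    unfolding disj_union_def snd_conv by (rule card_Un_le)
  also have "\<dots> \<le> card (snd G) + card (snd H)"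
    using assms by (intro add_mono card_image_le)
  finally show ?thesis .
qed

lemma card_fst_du:
  fixes G :: "'a hypergraph" and H :: "'b hypergraph"
  assumes "finite (fst G)" "finite (fst H)"
  shows "card (fst (disj_union G H)) = card (fst G) + card (fst H)"
proof -
  have "card (fst (disj_union G H)) = card ((Inl :: 'a \<Rightarrow> 'a + 'b) ` fst G) + card ((Inr :: 'b \<Rightarrow> 'a + 'b) ` fst H)"
    unfolding disj_union_def fst_conv using assms by (intro card_Un_disjoint) auto
  also have "card ((Inl :: 'a \<Rightarrow> 'a + 'b) ` fst G) = card (fst G)"
    by (rule card_image) (simp add: inj_on_def)
  also have "card ((Inr :: 'b \<Rightarrow> 'a + 'b) ` fst H) = card (fst H)"
    by (rule card_image) (simp add: inj_on_def)
  finally show ?thesis .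
qed

definition VP :: "nat \<Rightarrow> nat \<Rightarrow> vtx set" where
  "VP r t = V ` {1..t+1} \<union> (\<lambda>(i,j). U i j) ` ({1..t} \<times> {1..r-2})"

lemma VP_card: "card (VP r t) = t + 1 + t * (r - 2)"
proof -
  have "card (VP r t) = card (V ` {1..t+1}) + card ((\<lambda>(i,j). U i j) ` ({1..t} \<times> {1..r-2}))"
    unfolding VP_def by (intro card_Un_disjoint) auto
  also have "card (V ` {1..t+1}) = t + 1" by (subst card_image) (auto simp: inj_on_def)
  also have "card ((\<lambda>(i,j). U i j) ` ({1..t} \<times> {1..r-2})) = card ({1..t} \<times> {1..r-2})"
    by (rule card_image) (auto simp: inj_on_def)
  also have "\<dots> = t * (r - 2)" by (simp add: card_cartesian_product)
  finally show ?thesis .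
qed

lemma VP_eq: "t \<ge> 1 \<Longrightarrow> \<Union> (path_edge r ` {1..<1+t}) = VP r t"
proof
  assume t: "t \<ge> 1"
  show "\<Union> (path_edge r ` {1..<1+t}) \<subseteq> VP r t"
    unfolding VP_def path_edge_def by auto
  show "VP r t \<subseteq> \<Union> (path_edge r ` {1..<1+t})"
  proof
    fix x assume "x \<in> VP r t"
    then consider k where "x = V k" "1 \<le> k" "k \<le> t + 1" | i j where "x = U i j" "1 \<le> i" "i \<le> t" "1 \<le> j" "j \<le> r - 2"
      unfolding VP_def by auto
    then show "x \<in> \<Union> (path_edge r ` {1..<1+t})"
    proof cases
      case 1
      show ?thesis
      proof (cases "k \<le> t")
        case True
        then have "x \<in> path_edge r k" using 1 unfolding path_edge_def by auto
        then show ?thesis using True 1 by auto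
      next
        case False
        then have "k = Suc t" using 1 by auto
        then have "x \<in> path_edge r t" using 1 unfolding path_edge_def by auto
        then show ?thesis using t by auto
      qed
    next
      case 2
      then have "x \<in> path_edge r i" unfolding path_edge_def by auto
      then show ?thesis using 2 by auto
    qed
  qed
qed

lemma LP_fst: "t \<ge> 1 \<Longrightarrow> fst (loose_path r t) = VP r t"
proof -
  assume "t \<ge> 1"
  have "fst (loose_path r t) = \<Union> (snd (loose_path r t))" unfolding loose_path_def Let_def by simp
  then show ?thesis unfolding LP_snd using VP_eq[OF \<open>t \<ge> 1\<close>] by simp
qed

lemma W_fst: "N \<ge> 5 \<Longrightarrow> fst (W_graph r N) = VP r (N-2) \<union> A ` {1..r-1} \<union> B ` {1..r-1}"
proof -
  assume N: "N \<ge> 5"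
  have "fst (W_graph r N) = \<Union> (snd (W_graph r N))" unfolding W_graph_def Let_def by simp
  also have "\<dots> = VP r (N-2) \<union> fa r \<union> fb r N" unfolding W_snd using VP_eq[of "N-2" r] N by auto
  also have "fa r = insert (V 2) (A ` {1..r-1})" unfolding fa_def by auto
  also have "fb r N = insert (V (N-2)) (B ` {1..r-1})" unfolding fb_def by auto
  also have "V 2 \<in> VP r (N-2)" "V (N-2) \<in> VP r (N-2)" using N unfolding VP_def by auto
  then have "VP r (N-2) \<union> insert (V 2) (A ` {1..r-1}) \<union> insert (V (N-2)) (B ` {1..r-1})
      = VP r (N-2) \<union> A ` {1..r-1} \<union> B ` {1..r-1}" by auto
  finally show ?thesis .
qed

lemma W_fst_card: "N \<ge> 5 \<Longrightarrow> card (fst (W_graph r N)) = (N-2) + 1 + (N-2) * (r-2) + (r-1) + (r-1)"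
proof -
  assume N: "N \<ge> 5"
  have f: "finite (VP r (N-2))" unfolding VP_def by auto
  have "card (fst (W_graph r N)) = card (VP r (N-2) \<union> A ` {1..r-1}) + card (B ` {1..r-1})"
    unfolding W_fst[OF N] using f by (intro card_Un_disjoint) (auto simp: VP_def)
  also have "card (VP r (N-2) \<union> A ` {1..r-1}) = card (VP r (N-2)) + card (A ` {1..r-1})"
    using f by (intro card_Un_disjoint) (auto simp: VP_def)
  also have "card (A ` {1..r-1}) = r - 1" by (subst card_image) (auto simp: inj_on_def)
  also have "card (B ` {1..r-1}) = r - 1" by (subst card_image) (auto simp: inj_on_def)
  finally show ?thesis by (simp add: VP_card)
qed


lemma LP_props: "finite (snd (loose_path r t))" "\<forall>x\<in>snd (loose_path r t). x \<noteq> {}"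
  "card (snd (loose_path r t)) \<le> t" "mp (snd (loose_path r t)) = p t"
proof -
  show "finite (snd (loose_path r t))" unfolding LP_snd by simp
  show "\<forall>x\<in>snd (loose_path r t). x \<noteq> {}" unfolding LP_snd using pe_ne by auto
  show "card (snd (loose_path r t)) \<le> t" unfolding LP_snd
    using card_image_le[of "{1..<1+t}" "path_edge r"] by simp
  show "mp (snd (loose_path r t)) = p t" unfolding LP_snd mp_path ..
qed

lemma W_props: "finite (snd (W_graph r N))" "\<forall>x\<in>snd (W_graph r N). x \<noteq> {}"
  "card (snd (W_graph r N)) \<le> N - 2 + 2"
proof -
  show "finite (snd (W_graph r N))" unfolding W_snd by simp
  show "\<forall>x\<in>snd (W_graph r N). x \<noteq> {}" unfolding W_snd using pe_ne fa_ne fb_ne by auto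
  have "card (snd (W_graph r N)) \<le> card (path_edge r ` {1..<1+(N-2)}) + card {fa r, fb r N}"
    unfolding W_snd by (rule card_Un_le)
  also have "\<dots> \<le> (N - 2) + 2"
    using card_image_le[of "{1..<1+(N-2)}" "path_edge r"] card_insert_le_m1[of 2 "{fb r N}" "fa r"] by (intro add_mono) auto
  finally show "card (snd (W_graph r N)) \<le> N - 2 + 2" .
qed

lemma side:
  assumes r: "r \<ge> 2" and a: "a \<ge> 1" and b: "b \<ge> 1"
  shows "matching_poly r (disj_union (loose_path r a) (W_graph r (b+4))) =
    (\<Sum>k\<le>a+b+4. monom ((-1)^k * coeff (p a * p b * [:1,4:]) k)
        ((a+1 + a*(r-2)) + (b+3 + (b+2)*(r-2) + (r-1) + (r-1)) - k*r))"
proof -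
  let ?K = "disj_union (loose_path r a) (W_graph r (b+4))"
  have fin: "finite (snd ?K)" unfolding disj_union_def using LP_props(1) W_props(1) by simp
  have c: "card (snd ?K) \<le> a+b+4"
    using card_snd_du[OF LP_props(1) W_props(1), of r a r "b+4"] LP_props(3)[of r a] W_props(3)[of r "b+4"] by simp
  have m: "mp (snd ?K) = p a * p b * [:1,4:]"
    unfolding mp_disj_union[OF LP_props(1) W_props(1) LP_props(2) W_props(2)] LP_props(4) mp_W[OF r b]
    by (simp only: mult_ac)
  have fv: "card (fst ?K) = (a+1 + a*(r-2)) + (b+3 + (b+2)*(r-2) + (r-1) + (r-1))"
  proof -
    have f1: "finite (fst (loose_path r a))" unfolding LP_fst[OF a] VP_def by auto
    have b4: "b + 4 \<ge> 5" using b by simp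
    have f2: "finite (fst (W_graph r (b+4)))" unfolding W_fst[OF b4] unfolding VP_def by auto
    show ?thesis unfolding card_fst_du[OF f1 f2] LP_fst[OF a] VP_card W_fst_card[of "b+4", OF _] using b
      by (simp add: W_fst_card)
  qed
  show ?thesis unfolding mpoly[OF fin c] m fv ..
qed

theorem lemma10:
  fixes m n r :: nat
  assumes "m \<ge> 6" and "n \<ge> 6" and "r \<ge> 2"
  shows "matching_poly r (disj_union (loose_path r (m - 5)) (W_graph r (n - 1))) =
         matching_poly r (disj_union (loose_path r (n - 5)) (W_graph r (m - 1)))"
proof -
  define a where "a = m - 5"
  define b where "b = n - 5"
  have a: "a \<ge> 1" and b: "b \<ge> 1" using assms unfolding a_def b_def by auto
  have n1: "n - 1 = b + 4" and m1: "m - 1 = a + 4" using assms unfolding a_def b_def by auto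
  have "matching_poly r (disj_union (loose_path r a) (W_graph r (b+4))) =
        matching_poly r (disj_union (loose_path r b) (W_graph r (a+4)))"
  proof -
    have e1: "a+b+4 = b+a+4" by simp
    have e2: "p a * p b * [:1,4:] = p b * p a * [:1,4:]" by (simp add: mult_ac)
    have e3: "(a+1 + a*(r-2)) + (b+3 + (b+2)*(r-2) + (r-1) + (r-1)) =
              (b+1 + b*(r-2)) + (a+3 + (a+2)*(r-2) + (r-1) + (r-1))"
    proof -
      obtain s where s: "r = s + 2" using assms(3) by (metis add.commute le_add_diff_inverse)
      show ?thesis unfolding s by (simp add: algebra_simps)
    qed
    show ?thesis unfolding side[OF assms(3) a b] side[OF assms(3) b a] e1 e2 e3 ..
  qed
  then show ?thesis unfolding a_def b_def n1 m1 by (simp add: a_def b_def)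
qed

end
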